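(* Let $(\mathfrak g,D)$ be a difference Lie algebra over $\mathbb R$ and let $\hat\omega:\wedge^2\mathfrak g\to\mathfrak g$, $\hat D:\mathfrak g\to\mathfrak g$ be linear maps generating an infinitesimal deformation of $(\mathfrak g,D)$. Then $(\hat\omega,\hat D)$ is a 2-cocycle: $\bar\delta(\hat\omega,\hat D)=0$, i.e. $d^{CE}_{\mathrm{ad}}\hat\omega=0$ and $d^{CE}_{\mathrm{ad}_D}\hat D+T(\hat\omega)=0$.
   Context: A difference Lie algebra $(\mathfrak g,D)$: a Lie algebra $\mathfrak g$ with linear $D$ satisfying $D[x,y]=[x,D(y)]-[y,D(x)]+[D(x),D(y)]$. $\mathbb R[t]/(t^2)\otimes\mathfrak g$ carries the $\mathbb R[t]/(t^2)$-bilinear extension of the bracket and the $\mathbb R[t]/(t^2)$-linear extension of $D$. $(\hat\omega,\hat D)$ generates an infinitesimal deformation if $[\cdot,\cdot]_t=[\cdot,\cdot]+t\hat\omega$ is a Lie bracket on $\mathbb R[t]/(t^2)\otimes\mathfrak g$ and $D_t=D+t\hat D$ is a difference operator for $[\cdot,\cdot]_t$, i.e. $D_t[x,y]_t=[D_t x,y]_t+[x,D_ty]_t+[D_tx,D_ty]_t$. $d^{CE}_{\mathrm{ad}}$ is the Chevalley–Eilenberg differential with coefficients in the adjoint representation, $d^{CE}_{\mathrm{ad}_D}$ that with coefficients in $\mathrm{ad}_D(x)u=[x,u]+[D(x),u]$; for $f\in\mathrm{Hom}(\wedge^n\mathfrak g,\mathfrak g)$, $T(f)(x_1,\dots,x_n)=(-1)^n\big(\sum_{k=1}^n\sum_{1\le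 i_1<\cdots<i_k\le n}f(y_1,\dots,y_n)-D(f(x_1,\dots,x_n))\big)$, $y_j=D(x_j)$ for $j\in\{i_1,\dots,i_k\}$ and $y_j=x_j$ otherwise. The cochains are $C^n(\mathfrak g,D)=\mathrm{Hom}(\wedge^n\mathfrak g,\mathfrak g)\oplus\mathrm{Hom}(\wedge^{n-1}\mathfrak g,\mathfrak g)$ ($n\ge2$), $C^1=\mathrm{Hom}(\mathfrak g,\mathfrak g)$, with $\bar\delta(f,\theta)=(d^{CE}_{\mathrm{ad}}f,d^{CE}_{\mathrm{ad}_D}\theta+T(f))$. *)

theory Defs
  imports Complex_Main "HOL-Analysis.Product_Vector"
begin

definition bilinear_map :: "('a::real_vector \<Rightarrow> 'a \<Rightarrow> 'b::real_vector) \<Rightarrow> bool" where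
  "bilinear_map f \<longleftrightarrow> (\<forall>x. linear (f x)) \<and> (\<forall>y. linear (\<lambda>x. f x y))"

definition lie_algebra :: "('a::real_vector \<Rightarrow> 'a \<Rightarrow> 'a) \<Rightarrow> bool" where
  "lie_algebra br \<longleftrightarrow> bilinear_map br \<and> (\<forall>x. br x x = 0) \<and>
     (\<forall>x y z. br x (br y z) + br y (br z x) + br z (br x y) = 0)"

text \<open>Alternating bilinear maps, i.e. linear maps on the exterior square.\<close>
definition alt_bilinear :: "('a::real_vector \<Rightarrow> 'a \<Rightarrow> 'a) \<Rightarrow> bool" where
  "alt_bilinear f \<longleftrightarrow> bilinear_map f \<and> (\<forall>x. f x x = 0)"

definition difference_operator :: "('a::real_vector \<Rightarrow> 'a \<Rightarrow> 'a) \<Rightarrow> ('a \<Rightarrow> 'a) \<Rightarrow> bool" where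
  "difference_operator br D \<longleftrightarrow> linear D \<and>
     (\<forall>x y. D (br x y) = br x (D y) - br y (D x) + br (D x) (D y))"

definition difference_lie_algebra :: "('a::real_vector \<Rightarrow> 'a \<Rightarrow> 'a) \<Rightarrow> ('a \<Rightarrow> 'a) \<Rightarrow> bool" where
  "difference_lie_algebra br D \<longleftrightarrow> lie_algebra br \<and> difference_operator br D"

section \<open>The module R[t]/(t^2) \<otimes> g, represented by pairs (x, y) = x + t y\<close>

text \<open>Scalar multiplication by a + t b (scalars of R[t]/(t^2) represented by pairs of reals).\<close>
definition dn_smul :: "real \<times> real \<Rightarrow> 'a::real_vector \<times> 'a \<Rightarrow> 'a \<times> 'a" where
  "dn_smul s v = (fst s *\<^sub>R fst v, fst s *\<^sub>R snd v + snd s *\<^sub>R fst v)"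

definition dn_lie_bracket :: "('a::real_vector \<times> 'a \<Rightarrow> 'a \<times> 'a \<Rightarrow> 'a \<times> 'a) \<Rightarrow> bool" where
  "dn_lie_bracket B \<longleftrightarrow>
     (\<forall>u v w. B (u + v) w = B u w + B v w) \<and>
     (\<forall>u v w. B u (v + w) = B u v + B u w) \<and>
     (\<forall>s u v. B (dn_smul s u) v = dn_smul s (B u v)) \<and>
     (\<forall>s u v. B u (dn_smul s v) = dn_smul s (B u v)) \<and>
     (\<forall>u. B u u = 0) \<and>
     (\<forall>u v w. B u (B v w) + B v (B w u) + B w (B u v) = 0)"

text \<open>[.,.]_t = [.,.] + t \<omega>, with [.,.] and \<omega> extended R[t]/(t^2)-bilinearly (t^2 = 0).\<close>
definition deformed_bracket ::
  "('a::real_vector \<Rightarrow> 'a \<Rightarrow> 'a) \<Rightarrow> ('a \<Rightarrow> 'a \<Rightarrow> 'a) \<Rightarrow> 'a \<times> 'a \<Rightarrow> 'a \<times> 'a \<Rightarrow> 'a \<times> 'a" where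
  "deformed_bracket br \<omega> u v =
     (br (fst u) (fst v), br (fst u) (snd v) + br (snd u) (fst v) + \<omega> (fst u) (fst v))"

text \<open>D_t = D + t \<hat>D, extended R[t]/(t^2)-linearly.\<close>
definition deformed_op :: "('a::real_vector \<Rightarrow> 'a) \<Rightarrow> ('a \<Rightarrow> 'a) \<Rightarrow> 'a \<times> 'a \<Rightarrow> 'a \<times> 'a" where
  "deformed_op D Dh u = (D (fst u), D (snd u) + Dh (fst u))"

definition generates_inf_deformation ::
  "('a::real_vector \<Rightarrow> 'a \<Rightarrow> 'a) \<Rightarrow> ('a \<Rightarrow> 'a) \<Rightarrow> ('a \<Rightarrow> 'a \<Rightarrow> 'a) \<Rightarrow> ('a \<Rightarrow> 'a) \<Rightarrow> bool" where
  "generates_inf_deformation br D \<omega> Dh \<longleftrightarrow>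
     (let Bt = deformed_bracket br \<omega>; Dt = deformed_op D Dh in
      dn_lie_bracket Bt \<and>
      (\<forall>u v. Dt (Bt u v) = Bt (Dt u) v + Bt u (Dt v) + Bt (Dt u) (Dt v)))"

definition CE_d1 :: "('a \<Rightarrow> 'a \<Rightarrow> 'a) \<Rightarrow> ('a \<Rightarrow> 'a \<Rightarrow> 'a::real_vector) \<Rightarrow> ('a \<Rightarrow> 'a) \<Rightarrow> 'a \<Rightarrow> 'a \<Rightarrow> 'a" where
  "CE_d1 br \<rho> \<theta> x1 x2 = \<rho> x1 (\<theta> x2) - \<rho> x2 (\<theta> x1) - \<theta> (br x1 x2)"

definition CE_d2 :: "('a \<Rightarrow> 'a \<Rightarrow> 'a) \<Rightarrow> ('a \<Rightarrow> 'a \<Rightarrow> 'a::real_vector) \<Rightarrow> ('a \<Rightarrow> 'a \<Rightarrow> 'a) \<Rightarrow> 'a \<Rightarrow> 'a \<Rightarrow> 'a \<Rightarrow> 'a" where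
  "CE_d2 br \<rho> f x1 x2 x3 =
     \<rho> x1 (f x2 x3) - \<rho> x2 (f x1 x3) + \<rho> x3 (f x1 x2)
     - f (br x1 x2) x3 + f (br x1 x3) x2 - f (br x2 x3) x1"

definition ad :: "('a \<Rightarrow> 'a \<Rightarrow> 'a) \<Rightarrow> 'a \<Rightarrow> 'a \<Rightarrow> 'a" where
  "ad br x u = br x u"

definition ad_D :: "('a \<Rightarrow> 'a \<Rightarrow> 'a::real_vector) \<Rightarrow> ('a \<Rightarrow> 'a) \<Rightarrow> 'a \<Rightarrow> 'a \<Rightarrow> 'a" where
  "ad_D br D x u = br x u + br (D x) u"

text \<open>T on 2-cochains (n = 2, sign (-1)^2 = 1).\<close>
definition T2 :: "('a \<Rightarrow> 'a::real_vector) \<Rightarrow> ('a \<Rightarrow> 'a \<Rightarrow> 'a) \<Rightarrow> 'a \<Rightarrow> 'a \<Rightarrow> 'a" where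
  "T2 D f x1 x2 = f (D x1) x2 + f x1 (D x2) + f (D x1) (D x2) - D (f x1 x2)"

end

theory Submission
  imports Defs
begin

lemma alt_antisym:
  assumes "bilinear_map f" "\<forall>x. f x x = 0"
  shows "f y x = - f x y"
proof -
  have l1: "linear (f z)" for z using assms(1) unfolding bilinear_map_def by blast
  have l2: "linear (\<lambda>x. f x z)" for z using assms(1) unfolding bilinear_map_def by blast
  have "f (x + y) (x + y) = f x x + f x y + f y x + f y y"
    using linear_add[OF l1, of "x+y" x y] linear_add[OF l2, of x x y] linear_add[OF l2, of x y y] linear_add[OF l2, of x y x]
      linear_add[OF l1, of x x y] linear_add[OF l1, of y x y]
    by (simp add: algebra_simps)
  then show ?thesis using assms(2) by (simp add: eq_neg_iff_add_eq_0 add.commute)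
qed

lemma bil_zero:
  assumes "bilinear_map f"
  shows "f x 0 = 0" "f 0 x = 0" "f x (- y) = - f x y" "f (- y) x = - f y x"
proof -
  have l1: "linear (f x)" using assms unfolding bilinear_map_def by blast
  have l2: "linear (\<lambda>y. f y x)" using assms unfolding bilinear_map_def by blast
  show "f x 0 = 0" using linear_0[OF l1] .
  show "f 0 x = 0" using linear_0[OF l2] by simp
  show "f x (- y) = - f x y" using linear_neg[OF l1] .
  show "f (- y) x = - f y x" using linear_neg[OF l2] by simp
qed

theorem theorem4p4:
  fixes br :: "'a::real_vector \<Rightarrow> 'a \<Rightarrow> 'a" and D :: "'a \<Rightarrow> 'a"
    and \<omega> :: "'a \<Rightarrow> 'a \<Rightarrow> 'a" and Dh :: "'a \<Rightarrow> 'a"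
  assumes "difference_lie_algebra br D"
    and "alt_bilinear \<omega>" and "linear Dh"
    and "generates_inf_deformation br D \<omega> Dh"
  shows "(\<forall>x1 x2 x3. CE_d2 br (ad br) \<omega> x1 x2 x3 = 0) \<and>
         (\<forall>x1 x2. CE_d1 br (ad_D br D) Dh x1 x2 + T2 D \<omega> x1 x2 = 0)"
proof -
  have bb: "bilinear_map br" "\<forall>x. br x x = 0"
    using assms(1) unfolding difference_lie_algebra_def lie_algebra_def by auto
  have bw: "bilinear_map \<omega>" "\<forall>x. \<omega> x x = 0"
    using assms(2) unfolding alt_bilinear_def by auto
  have ab: "\<And>x y. br y x = - br x y" using alt_antisym[OF bb] .
  have aw: "\<And>x y. \<omega> y x = - \<omega> x y" using alt_antisym[OF bw] .
  note z = bil_zero[OF bb(1)] bil_zero[OF bw(1)]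
  have J: "\<And>u v w. deformed_bracket br \<omega> u (deformed_bracket br \<omega> v w) + deformed_bracket br \<omega> v (deformed_bracket br \<omega> w u) + deformed_bracket br \<omega> w (deformed_bracket br \<omega> u v) = 0"
   and DD: "\<And>u v. deformed_op D Dh (deformed_bracket br \<omega> u v) = deformed_bracket br \<omega> (deformed_op D Dh u) v + deformed_bracket br \<omega> u (deformed_op D Dh v) + deformed_bracket br \<omega> (deformed_op D Dh u) (deformed_op D Dh v)"
    using assms(4) unfolding generates_inf_deformation_def dn_lie_bracket_def Let_def by auto
  have "CE_d2 br (ad br) \<omega> x1 x2 x3 = 0" for x1 x2 x3
  proof -
    have "snd (deformed_bracket br \<omega> (x1,0) (deformed_bracket br \<omega> (x2,0) (x3,0)) + deformed_bracket br \<omega> (x2,0) (deformed_bracket br \<omega> (x3,0) (x1,0)) + deformed_bracket br \<omega> (x3,0) (deformed_bracket br \<omega> (x1,0) (x2,0))) = 0"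
      using J by simp
    hence "br x1 (\<omega> x2 x3) + \<omega> x1 (br x2 x3) + (br x2 (\<omega> x3 x1) + \<omega> x2 (br x3 x1)) + (br x3 (\<omega> x1 x2) + \<omega> x3 (br x1 x2)) = 0"
      by (simp add: deformed_bracket_def z)
    thus ?thesis unfolding CE_d2_def ad_def
      using aw[of x1 x3] aw[of "br x1 x2" x3] aw[of "br x3 x1" x2] aw[of "br x2 x3" x1] ab[of x1 x3]
      by (simp add: algebra_simps z)
  qed
  moreover have "CE_d1 br (ad_D br D) Dh x1 x2 + T2 D \<omega> x1 x2 = 0" for x1 x2
  proof -
    have "snd (deformed_op D Dh (deformed_bracket br \<omega> (x1,0) (x2,0))) = snd (deformed_bracket br \<omega> (deformed_op D Dh (x1,0)) (x2,0) + deformed_bracket br \<omega> (x1,0) (deformed_op D Dh (x2,0)) + deformed_bracket br \<omega> (deformed_op D Dh (x1,0)) (deformed_op D Dh (x2,0)))"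
      using DD by metis
    hence "D (\<omega> x1 x2) + Dh (br x1 x2) = (br (Dh x1) x2 + \<omega> (D x1) x2) + (br x1 (Dh x2) + \<omega> x1 (D x2)) + (br (D x1) (Dh x2) + br (Dh x1) (D x2) + \<omega> (D x1) (D x2))"
      using linear_0[OF assms(3)] linear_0[of D] assms(1)
      by (simp add: deformed_bracket_def deformed_op_def z difference_lie_algebra_def difference_operator_def)
    thus ?thesis unfolding CE_d1_def ad_D_def T2_def
      using ab[of x2 "Dh x1"] ab[of "D x2" "Dh x1"]
      by (simp add: algebra_simps)
  qed
  ultimately show ?thesis by blast
qed

end
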